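(* (i) Let $I=[-1,1]$ and let $(\mathcal X_j)_{j\ge1}$ be a sequence of $C^2$-functions $\mathcal X_j: I^2\to \mathbb R$ such that $\partial_x \mathcal X_j$ does not vanish. Let $(\mathcal B_j)_j$ be subsets of $I^2$ with $\mathrm{diam}\,\mathcal B_j\to0$ as $j\to\infty$, and $(x^0_j,y^0_j)\in\mathcal B_j$. Assume that the sequences $\|\partial_x \log|\partial_x \mathcal X_j| \|_{C^0}$ and $\|\partial_y \log|\partial_x \mathcal X_j| \|_{C^0}$ are bounded. Then the maps \[\Upsilon_j : (x,y) \in \mathcal B_j \mapsto \frac{\mathcal X_{j}(x,y)-\mathcal X_{j}(x^0_j,y)}{\partial_x \mathcal X_{j}(x^0_j,y^0_j)} + x^0_j \] are $C^1$-close to the first coordinate projection $(x,y)\mapsto x$ when $j$ is large, i.e. $\sup_{\mathcal B_j}\big(|\Upsilon_j(x,y)-x|+\|D\Upsilon_j(x,y)-(1,0)\|\big)\to 0$ as $j\to\infty$. (ii) Let $\rho>0$, $\tilde I=I+i[-\rho,\rho]$, and let $(\mathcal Z_j)_j$ be holomorphic functions $\mathcal Z_j:\tilde I^2\to\tilde I$ with $0<|\partial_z\mathcal Z_j|<1$. Let $\mathcal B_j\subset\tilde I^2$ and $(z_j,w_j)\in\mathcal B_j$ be such that $\mathrm{diam}\,\mathcal B_j/|\partial_z\mathcal Z_j(z_j,w_j)|\to0$ as $j\to\infty$ and the points $(z_j,w_j)$ stay at distance bounded below by a positive constant from $\partial\tilde I^2$. Then the maps \[ \tilde \Upsilon_j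 : (z,w) \in \mathcal B_j \mapsto \frac{\mathcal Z_{j}(z,w)-\mathcal Z_{j}(z_j,w)}{\partial_z \mathcal Z_{j}(z_j,w_j)} + z_j \] are $C^1$-close to the first coordinate projection $(z,w)\mapsto z$ when $j$ is large, in the same sense. *)

theory Defs
  imports "HOL-Analysis.Analysis"
begin

definition sqI :: "(real \<times> real) set" where
  "sqI = {-1..1} \<times> {-1..1}"

definition Itl :: "real \<Rightarrow> complex set" where
  "Itl \<rho> = {z. -1 \<le> Re z \<and> Re z \<le> 1 \<and> \<bar>Im z\<bar> \<le> \<rho>}"

definition C2_on :: "(real \<times> real \<Rightarrow> real) \<Rightarrow> (real \<times> real) set \<Rightarrow> bool" where
  "C2_on f S \<longleftrightarrow>
     (\<exists>U (f' :: real \<times> real \<Rightarrow> ((real \<times> real) \<Rightarrow>\<^sub>L real))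
        (f'' :: real \<times> real \<Rightarrow> ((real \<times> real) \<Rightarrow>\<^sub>L ((real \<times> real) \<Rightarrow>\<^sub>L real))).
        open U \<and> S \<subseteq> U \<and>
        (\<forall>p\<in>U. (f has_derivative blinfun_apply (f' p)) (at p)) \<and>
        (\<forall>p\<in>U. (f' has_derivative blinfun_apply (f'' p)) (at p)) \<and>
        continuous_on U f'')"

text \<open>Holomorphic function of two complex variables on an open set:
  complex (Frechet) differentiable at every point, i.e. the derivative is C-linear.\<close>
definition holomorphic2_on :: "(complex \<times> complex \<Rightarrow> complex) \<Rightarrow> (complex \<times> complex) set \<Rightarrow> bool" where
  "holomorphic2_on f U \<longleftrightarrow>
     (\<forall>p\<in>U. \<exists>a b. (f has_derivative (\<lambda>(u, v). a * u + b * v)) (at p))"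

definition pdx :: "('a::real_normed_field \<times> 'b \<Rightarrow> 'a) \<Rightarrow> 'a \<times> 'b \<Rightarrow> 'a" where
  "pdx f p = deriv (\<lambda>t. f (t, snd p)) (fst p)"

definition pdy :: "('a \<times> 'b::real_normed_field \<Rightarrow> 'b) \<Rightarrow> 'a \<times> 'b \<Rightarrow> 'b" where
  "pdy f p = deriv (\<lambda>t. f (fst p, t)) (snd p)"

definition C1_close_to_fst ::
  "(nat \<Rightarrow> 'a::real_normed_vector \<times> 'b::real_normed_vector \<Rightarrow> 'a) \<Rightarrow> (nat \<Rightarrow> ('a \<times> 'b) set) \<Rightarrow> bool" where
  "C1_close_to_fst Ups B \<longleftrightarrow>
     (\<forall>\<epsilon>>0. \<forall>\<^sub>F j in sequentially. \<forall>p\<in>B j.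
        Ups j differentiable (at p) \<and>
        norm (Ups j p - fst p) + onorm (\<lambda>v. frechet_derivative (Ups j) (at p) v - fst v) < \<epsilon>)"

end

theory Submission
  imports Defs "HOL-Complex_Analysis.Complex_Analysis"
begin


lemma deriv_ln_abs:
  fixes g :: "real \<Rightarrow> real"
  assumes g0: "g a \<noteq> 0" and d: "(g has_real_derivative D) (at a)"
  shows "((\<lambda>t. ln \<bar>g t\<bar>) has_real_derivative D / g a) (at a)"
proof -
  have cont: "isCont g a" using d DERIV_isCont by blast
  show ?thesis
  proof (cases "g a > 0")
    case True
    have ev: "eventually (\<lambda>t. g t > 0) (nhds a)"
      using cont True by (metis isCont_def order_tendstoD(1) tendsto_at_iff_tendsto_nhds)
    have "((\<lambda>t. ln (g t)) has_real_derivative D / g a) (at a)"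
      using d True by (auto intro!: derivative_eq_intros simp: field_simps)
    moreover have "eventually (\<lambda>t. t \<in> UNIV \<longrightarrow> ln \<bar>g t\<bar> = ln (g t)) (nhds a)"
      using ev by eventually_elim auto
    ultimately show ?thesis
      using has_field_derivative_cong_ev[of a a UNIV "\<lambda>t. ln \<bar>g t\<bar>" "\<lambda>t. ln (g t)" "D / g a" "D / g a" UNIV]
      by simp
  next
    case False
    hence neg: "g a < 0" using g0 by simp
    have ev: "eventually (\<lambda>t. g t < 0) (nhds a)"
      using cont neg by (metis isCont_def order_tendstoD(2) tendsto_at_iff_tendsto_nhds)
    have "((\<lambda>t. ln (- g t)) has_real_derivative D / g a) (at a)"
      using d neg by (auto intro!: derivative_eq_intros simp: field_simps)
    moreover have "eventually (\<lambda>t. t \<in> UNIV \<longrightarrow> ln \<bar>g t\<bar> = ln (- g t)) (nhds a)"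
      using ev by eventually_elim auto
    ultimately show ?thesis
      using has_field_derivative_cong_ev[of a a UNIV "\<lambda>t. ln \<bar>g t\<bar>" "\<lambda>t. ln (- g t)" "D / g a" "D / g a" UNIV]
      by simp
  qed
qed

lemma pd_x_real:
  fixes F :: "real \<times> real \<Rightarrow> real"
  assumes "(F has_derivative F') (at (x,y))"
  shows "((\<lambda>t. F (t,y)) has_real_derivative F' (1,0)) (at x)"
proof -
  have lin: "bounded_linear F'" using assms has_derivative_bounded_linear by blast
  have "((\<lambda>t. (t,y)) has_derivative (\<lambda>u. (u,0))) (at x)"
    by (auto intro!: derivative_eq_intros)
  from diff_chain_at[OF this, of F F'] assms
  have "((\<lambda>t. F(t,y)) has_derivative (\<lambda>u. F' (u,0))) (at x)" by (simp add: o_def)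
  moreover have "(\<lambda>u. F'(u,0)) = (\<lambda>u. F'(1,0) * u)"
  proof
    fix u :: real
    have "(u,0::real) = u *\<^sub>R (1,0)" by simp
    then show "F'(u,0) = F'(1,0)*u" using linear_simps(5)[OF lin, of u "(1,0)"] by simp
  qed
  ultimately show ?thesis by (simp add: has_field_derivative_def)
qed

lemma pd_y_real:
  fixes F :: "real \<times> real \<Rightarrow> real"
  assumes "(F has_derivative F') (at (x,y))"
  shows "((\<lambda>t. F (x,t)) has_real_derivative F' (0,1)) (at y)"
proof -
  have lin: "bounded_linear F'" using assms has_derivative_bounded_linear by blast
  have "((\<lambda>t. (x,t)) has_derivative (\<lambda>u. (0,u))) (at y)"
    by (auto intro!: derivative_eq_intros)
  from diff_chain_at[OF this, of F F'] assms
  have "((\<lambda>t. F(x,t)) has_derivative (\<lambda>u. F' (0,u))) (at y)" by (simp add: o_def)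
  moreover have "(\<lambda>u. F'(0,u)) = (\<lambda>u. F'(0,1) * u)"
  proof
    fix u :: real
    have "(0::real,u) = u *\<^sub>R (0,1)" by simp
    then show "F'(0,u) = F'(0,1)*u" using linear_simps(5)[OF lin, of u "(0,1)"] by simp
  qed
  ultimately show ?thesis by (simp add: has_field_derivative_def)
qed

lemma mvt1:
  fixes f :: "real \<Rightarrow> real"
  assumes "\<And>t. t \<in> closed_segment a b \<Longrightarrow> (f has_real_derivative f' t) (at t)"
    "\<And>t. t \<in> closed_segment a b \<Longrightarrow> \<bar>f' t\<bar> \<le> B"
  shows "\<bar>f b - f a\<bar> \<le> B * \<bar>b - a\<bar>"
  using field_differentiable_bound[OF convex_closed_segment, of a b f f' B b a] assms
    has_field_derivative_at_within ends_in_segment by fastforce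

lemma lip_deriv:
  fixes f :: "real \<Rightarrow> real"
  assumes d: "(f has_real_derivative D) (at y)" and y: "y \<in> {-1..1}"
    and L: "\<And>z. z \<in> {-1..1} \<Longrightarrow> \<bar>f z - f y\<bar> \<le> L * \<bar>z - y\<bar>"
  shows "\<bar>D\<bar> \<le> L"
proof -
  have "(f has_real_derivative D) (at y within {-1..1})" using d has_field_derivative_at_within by blast
  hence "((\<lambda>z. (f z - f y)/(z - y)) \<longlongrightarrow> D) (at y within {-1..1})" by (simp add: has_field_derivative_iff)
  moreover have "at y within {-1..1::real} \<noteq> bot" using y by (simp add: trivial_limit_within islimpt_Icc)
  moreover have "\<forall>\<^sub>F z in at y within {-1..1}. norm ((f z - f y)/(z-y)) \<le> L"
    unfolding eventually_at_filter
  proof (rule always_eventually, intro allI impI)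
    fix z assume "z \<noteq> y" "z \<in> {-1..1::real}"
    then show "norm ((f z - f y)/(z-y)) \<le> L" using L[of z]
      by (simp add: abs_divide pos_divide_le_eq)
  qed
  ultimately show ?thesis using Lim_norm_ubound by fastforce
qed

lemma seg_in_I: "a \<in> {-1..1::real} \<Longrightarrow> b \<in> {-1..1} \<Longrightarrow> t \<in> closed_segment a b \<Longrightarrow> t \<in> {-1..1}"
  by (auto simp: closed_segment_eq_real_ivl split: if_splits)

lemma seg_le: "t \<in> closed_segment (a::real) b \<Longrightarrow> \<bar>t - a\<bar> \<le> \<bar>b - a\<bar>"
  by (auto simp: closed_segment_eq_real_ivl split: if_splits)

lemma blin_pair: "blinfun_apply (L :: (real\<times>real) \<Rightarrow>\<^sub>L 'b::real_normed_vector) (u,v) = u *\<^sub>R L (1,0) + v *\<^sub>R L (0,1)"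
proof -
  have "(u,v) = u *\<^sub>R (1,0) + v *\<^sub>R ((0,1)::real\<times>real)" by simp
  then show ?thesis by (metis blinfun.add_right blinfun.scaleR_right)
qed


lemma sqI_iff: "(a,b) \<in> sqI \<longleftrightarrow> a \<in> {-1..1} \<and> b \<in> {-1..1}"
  by (simp add: sqI_def)

lemma partI_single:
  fixes X :: "real \<times> real \<Rightarrow> real" and U :: "(real \<times> real) set"
    and f' :: "real \<times> real \<Rightarrow> ((real \<times> real) \<Rightarrow>\<^sub>L real)"
    and f'' :: "real \<times> real \<Rightarrow> ((real \<times> real) \<Rightarrow>\<^sub>L ((real \<times> real) \<Rightarrow>\<^sub>L real))"
  assumes U: "open U" "sqI \<subseteq> U"
   and d1: "\<forall>p\<in>U. (X has_derivative blinfun_apply (f' p)) (at p)"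
   and d2: "\<forall>p\<in>U. (f' has_derivative blinfun_apply (f'' p)) (at p)"
   and nz: "\<forall>p\<in>sqI. pdx X p \<noteq> 0"
   and C: "\<forall>p\<in>sqI. \<bar>pdx (\<lambda>q. ln \<bar>pdx X q\<bar>) p\<bar> \<le> C \<and> \<bar>pdy (\<lambda>q. ln \<bar>pdx X q\<bar>) p\<bar> \<le> C"
   and q0: "(x0,y0) \<in> sqI" and p: "(x,y) \<in> sqI"
  shows "\<bar>(X(x,y) - X(x0,y))/pdx X (x0,y0) + x0 - x\<bar> \<le> 2*C*exp (4*C)*(dist (x,y) (x0,y0))^2"
   and "\<exists>D. ((\<lambda>q. (X q - X (x0, snd q))/pdx X (x0,y0) + x0) has_derivative D) (at (x,y)) \<and>
           onorm (\<lambda>v. D v - fst v) \<le> 3*C*exp (4*C)*dist (x,y) (x0,y0)"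
proof -
  define g where "g = pdx X"
  define k where "k = pdy X"
  define c where "c = g (x0,y0)"
  define E where "E = exp (4*C)"
  define gx where "gx q = blinfun_apply (blinfun_apply (f'' q) (1,0)) (1,0)" for q
  define gy where "gy q = blinfun_apply (blinfun_apply (f'' q) (0,1)) (1,0)" for q
  have gU: "g q = f' q (1,0)" if "q \<in> U" for q
  proof -
    obtain a b where q: "q = (a,b)" by (cases q)
    have "((\<lambda>t. X (t,b)) has_real_derivative f' q (1,0)) (at a)"
      using pd_x_real[of X "f' q" a b] d1 that q by auto
    then show ?thesis unfolding g_def pdx_def q by (simp add: DERIV_imp_deriv)
  qed
  have kU: "k q = f' q (0,1)" if "q \<in> U" for q
  proof -
    obtain a b where q: "q = (a,b)" by (cases q)
    have "((\<lambda>t. X (a,t)) has_real_derivative f' q (0,1)) (at b)"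
      using pd_y_real[of X "f' q" a b] d1 that q by auto
    then show ?thesis unfolding k_def pdy_def q by (simp add: DERIV_imp_deriv)
  qed
  have gder: "(g has_derivative (\<lambda>h. blinfun_apply (f'' q h) (1,0))) (at q)" if "q \<in> U" for q
  proof -
    have "((\<lambda>r. blinfun_apply (f' r) (1,0)) has_derivative (\<lambda>h. blinfun_apply (f'' q h) (1,0))) (at q)"
      using bounded_linear.has_derivative[OF blinfun.bounded_linear_left, of f' "blinfun_apply (f'' q)" "at q" "(1,0)"]
        d2 that by auto
    then show ?thesis
      by (rule has_derivative_transform_within_open[OF _ U(1) that]) (simp add: gU)
  qed
  have gxd: "((\<lambda>t. g (t,b)) has_real_derivative gx (a,b)) (at a)" if "(a,b) \<in> U" for a b
    using pd_x_real[OF gder[OF that]] unfolding gx_def by simp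
  have gyd: "((\<lambda>t. g (a,t)) has_real_derivative gy (a,b)) (at b)" if "(a,b) \<in> U" for a b
    using pd_y_real[OF gder[OF that]] unfolding gy_def by simp
  have Xxd: "((\<lambda>t. X (t,b)) has_real_derivative g (a,b)) (at a)" if "(a,b) \<in> U" for a b
    using pd_x_real[of X "f' (a,b)" a b] d1 that gU[OF that] by auto
  have Xyd: "((\<lambda>t. X (a,t)) has_real_derivative k (a,b)) (at b)" if "(a,b) \<in> U" for a b
    using pd_y_real[of X "f' (a,b)" a b] d1 that kU[OF that] by auto
  have hx: "((\<lambda>t. ln \<bar>g (t,b)\<bar>) has_real_derivative gx (a,b) / g (a,b)) (at a)" if "(a,b) \<in> sqI" for a b
    using deriv_ln_abs[of "\<lambda>t. g (t,b)" a] gxd[of a b] that U nz unfolding g_def by auto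
  have hy: "((\<lambda>t. ln \<bar>g (a,t)\<bar>) has_real_derivative gy (a,b) / g (a,b)) (at b)" if "(a,b) \<in> sqI" for a b
    using deriv_ln_abs[of "\<lambda>t. g (a,t)" b] gyd[of a b] that U nz unfolding g_def by auto
  have hxb: "\<bar>gx (a,b) / g (a,b)\<bar> \<le> C" if "(a,b) \<in> sqI" for a b
    using C that hx[OF that] unfolding pdx_def g_def by (auto simp: DERIV_imp_deriv)
  have hyb: "\<bar>gy (a,b) / g (a,b)\<bar> \<le> C" if "(a,b) \<in> sqI" for a b
    using C that hy[OF that] unfolding pdy_def g_def by (auto simp: DERIV_imp_deriv)
  have C0: "0 \<le> C" using hxb[OF q0] by linarith
  have x0I: "x0 \<in> {-1..1}" "y0 \<in> {-1..1}" using q0 by (auto simp: sqI_def)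
  have xI: "x \<in> {-1..1}" "y \<in> {-1..1}" using p by (auto simp: sqI_def)
  have sqU: "(a,b) \<in> U" if "a \<in> {-1..1}" "b \<in> {-1..1}" for a b
    using U(2) that by (auto simp: sqI_def)
  have c0: "c \<noteq> 0" using nz q0 unfolding c_def g_def by auto
  have logb: "ln \<bar>g (a,b)\<bar> - ln \<bar>c\<bar> \<le> C * (\<bar>a - x0\<bar> + \<bar>b - y0\<bar>)" if ab: "(a,b) \<in> sqI" for a b
  proof -
    have aI: "a \<in> {-1..1}" "b \<in> {-1..1}" using ab by (auto simp: sqI_def)
    have h1: "\<bar>ln \<bar>g (a,b)\<bar> - ln \<bar>g (x0,b)\<bar>\<bar> \<le> C * \<bar>a - x0\<bar>"
      by (rule mvt1[of x0 a "\<lambda>t. ln \<bar>g (t,b)\<bar>" "\<lambda>t. gx (t,b) / g (t,b)"])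
         (use hx hxb seg_in_I[OF x0I(1) aI(1)] aI in \<open>auto simp: sqI_def\<close>)
    have h2: "\<bar>ln \<bar>g (x0,b)\<bar> - ln \<bar>g (x0,y0)\<bar>\<bar> \<le> C * \<bar>b - y0\<bar>"
      by (rule mvt1[of y0 b "\<lambda>t. ln \<bar>g (x0,t)\<bar>" "\<lambda>t. gy (x0,t) / g (x0,t)"])
         (use hy hyb seg_in_I[OF x0I(2) aI(2)] x0I in \<open>auto simp: sqI_def\<close>)
    show ?thesis using h1 h2 unfolding c_def distrib_left by linarith
  qed
  have gb: "\<bar>g q\<bar> \<le> \<bar>c\<bar> * E" if "q \<in> sqI" for q
  proof -
    obtain a b where q: "q = (a,b)" by (cases q)
    have ab: "\<bar>a - x0\<bar> \<le> 2" "\<bar>b - y0\<bar> \<le> 2" using that q x0I by (auto simp: sqI_def)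
    have "C * (\<bar>a - x0\<bar> + \<bar>b - y0\<bar>) \<le> 4 * C" using ab C0
      by (metis add_mono_thms_linordered_semiring(1) mult.commute mult_right_mono numeral_Bit0)
    hence "ln \<bar>g q\<bar> \<le> ln \<bar>c\<bar> + 4*C" using logb[of a b] that q by auto
    hence "exp (ln \<bar>g q\<bar>) \<le> exp (ln \<bar>c\<bar> + 4*C)" by simp
    moreover have "g q \<noteq> 0" using nz that g_def by auto
    ultimately show ?thesis using c0 unfolding E_def by (simp add: exp_add)
  qed
  have gxb: "\<bar>gx q\<bar> \<le> C * E * \<bar>c\<bar>" if "q \<in> sqI" for q
  proof -
    obtain a b where q: "q = (a,b)" by (cases q)
    have "g q \<noteq> 0" using nz that g_def by auto
    hence "\<bar>gx q\<bar> \<le> C * \<bar>g q\<bar>" using hxb[of a b] that q by (simp add: abs_divide divide_le_eq)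
    also have "\<dots> \<le> C * (\<bar>c\<bar> * E)" using gb[OF that] C0 by (rule mult_left_mono)
    finally show ?thesis by (simp add: ac_simps)
  qed
  have gyb: "\<bar>gy q\<bar> \<le> C * E * \<bar>c\<bar>" if "q \<in> sqI" for q
  proof -
    obtain a b where q: "q = (a,b)" by (cases q)
    have "g q \<noteq> 0" using nz that g_def by auto
    hence "\<bar>gy q\<bar> \<le> C * \<bar>g q\<bar>" using hyb[of a b] that q by (simp add: abs_divide divide_le_eq)
    also have "\<dots> \<le> C * (\<bar>c\<bar> * E)" using gb[OF that] C0 by (rule mult_left_mono)
    finally show ?thesis by (simp add: ac_simps)
  qed
  have gdiff: "\<bar>g (a,b) - c\<bar> \<le> C * E * \<bar>c\<bar> * (\<bar>a - x0\<bar> + \<bar>b - y0\<bar>)" if ab: "(a,b) \<in> sqI" for a b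
  proof -
    have aI: "a \<in> {-1..1}" "b \<in> {-1..1}" using ab by (auto simp: sqI_def)
    have h1: "\<bar>g (a,b) - g (x0,b)\<bar> \<le> C * E * \<bar>c\<bar> * \<bar>a - x0\<bar>"
      by (rule mvt1[of x0 a "\<lambda>t. g (t,b)" "\<lambda>t. gx (t,b)"])
         (use gxd[OF sqU] gxb seg_in_I[OF x0I(1) aI(1)] aI in \<open>auto simp: sqI_def\<close>)
    have h2: "\<bar>g (x0,b) - g (x0,y0)\<bar> \<le> C * E * \<bar>c\<bar> * \<bar>b - y0\<bar>"
      by (rule mvt1[of y0 b "\<lambda>t. g (x0,t)" "\<lambda>t. gy (x0,t)"])
         (use gyd[OF sqU] gyb seg_in_I[OF x0I(2) aI(2)] x0I in \<open>auto simp: sqI_def\<close>)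
    show ?thesis using h1 h2 unfolding c_def distrib_left by linarith
  qed
  have kdiff: "\<bar>k (x,y) - k (x0,y)\<bar> \<le> C * E * \<bar>c\<bar> * \<bar>x - x0\<bar>"
  proof -
    define F where "F t = X (x,t) - X (x0,t)" for t
    have Fd: "(F has_real_derivative (k (x,y) - k (x0,y))) (at y)"
      unfolding F_def using Xyd[OF sqU[OF xI(1) xI(2)]] Xyd[OF sqU[OF x0I(1) xI(2)]]
      by (auto intro!: derivative_eq_intros)
    have "\<bar>F z - F y\<bar> \<le> (C * E * \<bar>c\<bar> * \<bar>x - x0\<bar>) * \<bar>z - y\<bar>" if zI: "z \<in> {-1..1}" for z
    proof -
      have gb2: "\<bar>g (t,z) - g (t,y)\<bar> \<le> C * E * \<bar>c\<bar> * \<bar>z - y\<bar>" if tI: "t \<in> {-1..1}" for t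
        by (rule mvt1[of y z "\<lambda>s. g (t,s)" "\<lambda>s. gy (t,s)"])
           (use gyd[OF sqU] gyb seg_in_I[OF xI(2) zI] tI in \<open>auto simp: sqI_def\<close>)
      have "\<bar>(X (x,z) - X (x,y)) - (X (x0,z) - X (x0,y))\<bar> \<le> (C * E * \<bar>c\<bar> * \<bar>z - y\<bar>) * \<bar>x - x0\<bar>"
      proof (rule mvt1[of x0 x "\<lambda>t. X (t,z) - X (t,y)" "\<lambda>t. g (t,z) - g (t,y)"])
        fix t assume "t \<in> closed_segment x0 x"
        hence tI: "t \<in> {-1..1}" using seg_in_I[OF x0I(1) xI(1)] by auto
        show "((\<lambda>t. X (t,z) - X (t,y)) has_real_derivative g (t,z) - g (t,y)) (at t)"
          using Xxd[OF sqU[OF tI zI]] Xxd[OF sqU[OF tI xI(2)]] by (auto intro!: derivative_eq_intros)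
        show "\<bar>g (t,z) - g (t,y)\<bar> \<le> C * E * \<bar>c\<bar> * \<bar>z - y\<bar>" using gb2[OF tI] .
      qed
      then show ?thesis unfolding F_def by (simp add: algebra_simps)
    qed
    then show ?thesis using lip_deriv[OF Fd xI(2)] by blast
  qed
  have Xdiff: "\<bar>X (x,y) - X (x0,y) - c * (x - x0)\<bar> \<le> (C * E * \<bar>c\<bar> * (\<bar>x - x0\<bar> + \<bar>y - y0\<bar>)) * \<bar>x - x0\<bar>"
  proof -
    have "\<bar>(X (x,y) - c * x) - (X (x0,y) - c * x0)\<bar> \<le> (C * E * \<bar>c\<bar> * (\<bar>x - x0\<bar> + \<bar>y - y0\<bar>)) * \<bar>x - x0\<bar>"
    proof (rule mvt1[of x0 x "\<lambda>t. X (t,y) - c * t" "\<lambda>t. g (t,y) - c"])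
      fix t assume ts: "t \<in> closed_segment x0 x"
      hence tI: "t \<in> {-1..1}" using seg_in_I[OF x0I(1) xI(1)] by auto
      show "((\<lambda>t. X (t,y) - c * t) has_real_derivative g (t,y) - c) (at t)"
        using Xxd[OF sqU[OF tI xI(2)]] by (auto intro!: derivative_eq_intros)
      have "\<bar>g (t,y) - c\<bar> \<le> C * E * \<bar>c\<bar> * (\<bar>t - x0\<bar> + \<bar>y - y0\<bar>)"
        using gdiff[of t y] tI xI by (auto simp: sqI_def)
      also have "\<dots> \<le> C * E * \<bar>c\<bar> * (\<bar>x - x0\<bar> + \<bar>y - y0\<bar>)"
        using seg_le[OF ts] C0 E_def by (intro mult_left_mono) auto
      finally show "\<bar>g (t,y) - c\<bar> \<le> C * E * \<bar>c\<bar> * (\<bar>x - x0\<bar> + \<bar>y - y0\<bar>)" .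
    qed
    then show ?thesis by (simp add: algebra_simps)
  qed
  define d where "d = dist (x,y) (x0,y0)"
  have dx: "\<bar>x - x0\<bar> \<le> d" using dist_fst_le[of "(x,y)" "(x0,y0)"] unfolding d_def by (simp add: dist_real_def)
  have dy: "\<bar>y - y0\<bar> \<le> d" using dist_snd_le[of "(x,y)" "(x0,y0)"] unfolding d_def by (simp add: dist_real_def)
  have CE0: "0 \<le> C * E" using C0 E_def by simp
  have pc: "pdx X (x0,y0) = c" unfolding c_def g_def ..
  show "\<bar>(X(x,y) - X(x0,y))/pdx X (x0,y0) + x0 - x\<bar> \<le> 2*C*exp (4*C)*(dist (x,y) (x0,y0))^2"
  proof -
    have "(X(x,y) - X(x0,y))/c + x0 - x = (X (x,y) - X (x0,y) - c * (x - x0)) / c"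
      using c0 by (simp add: field_simps)
    hence "\<bar>(X(x,y) - X(x0,y))/c + x0 - x\<bar> = \<bar>X (x,y) - X (x0,y) - c * (x - x0)\<bar> / \<bar>c\<bar>"
      by (simp add: abs_divide)
    also have "\<dots> \<le> (C * E * \<bar>c\<bar> * (\<bar>x - x0\<bar> + \<bar>y - y0\<bar>)) * \<bar>x - x0\<bar> / \<bar>c\<bar>"
      by (rule divide_right_mono[OF Xdiff]) simp
    also have "\<dots> = C * E * ((\<bar>x - x0\<bar> + \<bar>y - y0\<bar>) * \<bar>x - x0\<bar>)"
      using c0 by (simp add: field_simps)
    also have "\<dots> \<le> C * E * ((d + d) * d)"
      using dx dy CE0 by (intro mult_left_mono mult_mono add_mono) auto
    finally show ?thesis unfolding pc d_def E_def by (simp add: power2_eq_square algebra_simps)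
  qed
  show "\<exists>D. ((\<lambda>q. (X q - X (x0, snd q))/pdx X (x0,y0) + x0) has_derivative D) (at (x,y)) \<and>
           onorm (\<lambda>v. D v - fst v) \<le> 3*C*exp (4*C)*dist (x,y) (x0,y0)"
  proof (intro exI conjI)
    have A: "(X has_derivative blinfun_apply (f' (x,y))) (at (x,y))" using d1 sqU[OF xI] by auto
    have "((\<lambda>q. (x0, snd q)) has_derivative (\<lambda>v. (0, snd v))) (at (x,y))"
      by (auto intro!: derivative_eq_intros)
    from diff_chain_at[OF this, of X "blinfun_apply (f' (x0,y))"] d1 sqU[OF x0I(1) xI(2)]
    have B0: "((\<lambda>q. X (x0, snd q)) has_derivative (\<lambda>v. f' (x0,y) (0, snd v))) (at (x,y))"
      by (simp add: o_def)
    have "((\<lambda>q. (X q - X (x0, snd q))/c) has_derivative (\<lambda>v. (f' (x,y) v - f' (x0,y) (0, snd v))/c)) (at (x,y))"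
      using bounded_linear.has_derivative[OF bounded_linear_divide[of c] has_derivative_diff[OF A B0]] .
    then show "((\<lambda>q. (X q - X (x0, snd q))/pdx X (x0,y0) + x0) has_derivative (\<lambda>v. (f' (x,y) v - f' (x0,y) (0, snd v))/c)) (at (x,y))"
      unfolding pc by (rule has_derivative_add_const)
    show "onorm (\<lambda>v. (f' (x,y) v - f' (x0,y) (0, snd v))/c - fst v) \<le> 3*C*exp (4*C)*dist (x,y) (x0,y0)"
    proof (rule onorm_le)
      fix v :: "real \<times> real"
      obtain u w where v: "v = (u,w)" by (cases v)
      have gxy: "\<bar>g (x,y) - c\<bar> \<le> C * E * \<bar>c\<bar> * (d + d)"
      proof -
        have "C * E * \<bar>c\<bar> * (\<bar>x - x0\<bar> + \<bar>y - y0\<bar>) \<le> C * E * \<bar>c\<bar> * (d + d)"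
          using dx dy CE0 by (intro mult_left_mono) auto
        then show ?thesis using gdiff[OF p] by linarith
      qed
      have kxy: "\<bar>k (x,y) - k (x0,y)\<bar> \<le> C * E * \<bar>c\<bar> * d"
      proof -
        have "C * E * \<bar>c\<bar> * \<bar>x - x0\<bar> \<le> C * E * \<bar>c\<bar> * d"
          using dx CE0 by (intro mult_left_mono) auto
        then show ?thesis using kdiff by linarith
      qed
      have f1: "f' (x,y) v = u * g (x,y) + w * k (x,y)"
        using blin_pair[of "f' (x,y)" u w] gU[OF sqU[OF xI]] kU[OF sqU[OF xI]] v by simp
      have f2: "f' (x0,y) (0, snd v) = w * k (x0,y)"
        using blin_pair[of "f' (x0,y)" 0 w] kU[OF sqU[OF x0I(1) xI(2)]] v by simp
      have e1: "(f' (x,y) v - f' (x0,y) (0, snd v))/c - fst v = ((g (x,y) - c) * u + (k (x,y) - k (x0,y)) * w) / c"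
        unfolding f1 f2 using c0 v by (simp add: field_simps)
      have uv: "\<bar>u\<bar> \<le> norm v" "\<bar>w\<bar> \<le> norm v" unfolding v
        by (simp_all add: norm_Pair real_sqrt_ge_abs1 real_sqrt_ge_abs2)
      have d0: "0 \<le> d" unfolding d_def by simp
      have nn2: "0 \<le> C * E * \<bar>c\<bar> * d" using C0 E_def d0 by (intro mult_nonneg_nonneg) auto
      have nn1: "0 \<le> C * E * \<bar>c\<bar> * (d + d)" using C0 E_def d0 by (intro mult_nonneg_nonneg) auto
      have t1: "\<bar>g (x,y) - c\<bar> * \<bar>u\<bar> \<le> (C * E * \<bar>c\<bar> * (d + d)) * norm v"
        by (rule mult_mono[OF gxy uv(1) nn1]) simp
      have t2: "\<bar>k (x,y) - k (x0,y)\<bar> * \<bar>w\<bar> \<le> (C * E * \<bar>c\<bar> * d) * norm v"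
        by (rule mult_mono[OF kxy uv(2) nn2]) simp
      have "\<bar>(g (x,y) - c) * u + (k (x,y) - k (x0,y)) * w\<bar> \<le> \<bar>g (x,y) - c\<bar> * \<bar>u\<bar> + \<bar>k (x,y) - k (x0,y)\<bar> * \<bar>w\<bar>"
        by (metis abs_mult abs_triangle_ineq)
      also have "\<dots> \<le> (C * E * \<bar>c\<bar> * (d + d)) * norm v + (C * E * \<bar>c\<bar> * d) * norm v"
        using t1 t2 by linarith
      finally have "\<bar>(g (x,y) - c) * u + (k (x,y) - k (x0,y)) * w\<bar> / \<bar>c\<bar> \<le> ((C * E * \<bar>c\<bar> * (d + d)) * norm v + (C * E * \<bar>c\<bar> * d) * norm v) / \<bar>c\<bar>"
        by (rule divide_right_mono) simp
      also have "\<dots> = 3 * C * E * d * norm v" using c0 by (simp add: field_simps)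
      finally show "norm ((f' (x,y) v - f' (x0,y) (0, snd v))/c - fst v) \<le> 3*C*exp (4*C)*dist (x,y) (x0,y0) * norm v"
        unfolding e1 real_norm_def E_def d_def by (simp add: abs_divide)
    qed
  qed
qed

lemma bounded_sqI: "bounded sqI"
  unfolding sqI_def by (intro bounded_Times) auto

lemma final_eps:
  fixes K :: real
  assumes K: "0 \<le> K" and lim: "(\<lambda>j. dm j) \<longlonglongrightarrow> 0" and dm0: "\<And>j. 0 \<le> dm j" and e: "0 < \<epsilon>"
  shows "\<forall>\<^sub>F j in sequentially. K * (dm j)^2 + K * dm j < \<epsilon>"
proof -
  define e where "e = min 1 (\<epsilon> / (2*K + 1))"
  have e0: "0 < e" using K e by (simp add: e_def)
  have "\<forall>\<^sub>F j in sequentially. dist (dm j) 0 < e" using lim e0 tendstoD by blast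
  then show ?thesis
  proof eventually_elim
    case (elim j)
    hence d1: "dm j < e" using dm0[of j] by simp
    have "dm j \<le> 1" using d1 e_def by simp
    hence "(dm j)^2 \<le> dm j" using dm0[of j] by (simp add: power2_eq_square mult_left_le)
    hence "K * (dm j)^2 + K * dm j \<le> 2 * K * dm j" using K by (simp add: mult_left_mono)
    also have "\<dots> \<le> 2 * K * e" using d1 K by (intro mult_left_mono) auto
    also have "\<dots> \<le> 2 * K * (\<epsilon> / (2*K + 1))" using K by (intro mult_left_mono) (auto simp: e_def)
    also have "\<dots> < \<epsilon>" using K e by (simp add: field_simps)
    finally show ?case .
  qed
qed

lemma partI:
  fixes X :: "nat \<Rightarrow> real \<times> real \<Rightarrow> real"
    and B :: "nat \<Rightarrow> (real \<times> real) set"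
    and x0 y0 :: "nat \<Rightarrow> real"
  assumes C2: "\<forall>j. C2_on (X j) sqI" and nz: "\<forall>j. \<forall>p\<in>sqI. pdx (X j) p \<noteq> 0"
    and BI: "\<forall>j. B j \<subseteq> sqI" and lim: "(\<lambda>j. diameter (B j)) \<longlonglongrightarrow> 0"
    and inB: "\<forall>j. (x0 j, y0 j) \<in> B j"
    and ex: "\<exists>C. \<forall>j. \<forall>p\<in>sqI. \<bar>pdx (\<lambda>q. ln \<bar>pdx (X j) q\<bar>) p\<bar> \<le> C \<and>
                        \<bar>pdy (\<lambda>q. ln \<bar>pdx (X j) q\<bar>) p\<bar> \<le> C"
  shows "C1_close_to_fst
           (\<lambda>j (x, y). (X j (x, y) - X j (x0 j, y)) / pdx (X j) (x0 j, y0 j) + x0 j) B"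
proof -
  obtain C where C: "\<forall>j. \<forall>p\<in>sqI. \<bar>pdx (\<lambda>q. ln \<bar>pdx (X j) q\<bar>) p\<bar> \<le> C \<and>
                        \<bar>pdy (\<lambda>q. ln \<bar>pdx (X j) q\<bar>) p\<bar> \<le> C" using ex by blast
  have "(0,0) \<in> sqI" by (simp add: sqI_def)
  hence "\<bar>pdx (\<lambda>q. ln \<bar>pdx (X 0) q\<bar>) (0,0)\<bar> \<le> C" using C by blast
  hence C0: "0 \<le> C" by linarith
  define K where "K = 3 * C * exp (4*C)"
  have K0: "0 \<le> K" using C0 by (simp add: K_def)
  define Ups where "Ups = (\<lambda>j (x, y). (X j (x, y) - X j (x0 j, y)) / pdx (X j) (x0 j, y0 j) + x0 j)"
  have key: "Ups j differentiable (at p) \<and>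
        norm (Ups j p - fst p) + onorm (\<lambda>v. frechet_derivative (Ups j) (at p) v - fst v)
          \<le> K * (diameter (B j))^2 + K * diameter (B j)" if pB: "p \<in> B j" for j p
  proof -
    obtain a b where p: "p = (a,b)" by (cases p)
    obtain U f' f'' where U: "open U" "sqI \<subseteq> U"
      and d1: "\<forall>p\<in>U. (X j has_derivative blinfun_apply (f' p)) (at p)"
      and d2: "\<forall>p\<in>U. (f' has_derivative blinfun_apply (f'' p)) (at p)"
    proof -
      have "C2_on (X j) sqI" using C2 by blast
      then show ?thesis using that unfolding C2_on_def by blast
    qed
    have q0: "(x0 j, y0 j) \<in> sqI" and pI: "(a,b) \<in> sqI" using inB BI pB p by auto
    have nzj: "\<forall>p\<in>sqI. pdx (X j) p \<noteq> 0" using nz by blast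
    have Cj: "\<forall>p\<in>sqI. \<bar>pdx (\<lambda>q. ln \<bar>pdx (X j) q\<bar>) p\<bar> \<le> C \<and> \<bar>pdy (\<lambda>q. ln \<bar>pdx (X j) q\<bar>) p\<bar> \<le> C"
      using C by blast
    note S = partI_single[OF U d1 d2 nzj Cj q0 pI]
    have Ue: "Ups j = (\<lambda>q. (X j q - X j (x0 j, snd q))/pdx (X j) (x0 j, y0 j) + x0 j)"
      unfolding Ups_def by (auto simp: case_prod_beta)
    obtain D where D: "((\<lambda>q. (X j q - X j (x0 j, snd q))/pdx (X j) (x0 j, y0 j) + x0 j) has_derivative D) (at (a,b))"
      and Db: "onorm (\<lambda>v. D v - fst v) \<le> 3*C*exp (4*C)*dist (a,b) (x0 j, y0 j)"
      using S(2) by blast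
    have dd: "dist (a,b) (x0 j, y0 j) \<le> diameter (B j)"
    proof -
      have "bounded (B j)" using bounded_subset[OF bounded_sqI] BI by blast
      moreover have "(a,b) \<in> B j" using pB p by simp
      moreover have "(x0 j, y0 j) \<in> B j" using inB by blast
      ultimately show ?thesis by (rule diameter_bounded_bound)
    qed
    have dn: "0 \<le> dist (a,b) (x0 j, y0 j)" by simp
    have fd: "frechet_derivative (Ups j) (at p) = D" using D frechet_derivative_at Ue p by metis
    have "norm (Ups j p - fst p) \<le> 2*C*exp (4*C)*(dist (a,b) (x0 j, y0 j))^2"
      using S(1) p Ue by simp
    also have "\<dots> \<le> K * (diameter (B j))^2"
      unfolding K_def using dd dn C0 by (intro mult_mono power_mono) auto
    finally have n1: "norm (Ups j p - fst p) \<le> K * (diameter (B j))^2" .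
    have "onorm (\<lambda>v. frechet_derivative (Ups j) (at p) v - fst v) \<le> K * diameter (B j)"
    proof -
      have "3*C*exp (4*C)*dist (a,b) (x0 j, y0 j) \<le> K * diameter (B j)"
        unfolding K_def by (rule mult_left_mono[OF dd]) (use C0 in simp)
      then show ?thesis using Db unfolding fd by linarith
    qed
    moreover have "Ups j differentiable (at p)" using D Ue p differentiable_def by metis
    ultimately show ?thesis using n1 by linarith
  qed
  show ?thesis
    unfolding C1_close_to_fst_def Ups_def[symmetric]
  proof (intro allI impI)
    fix \<epsilon> :: real assume e: "0 < \<epsilon>"
    have "\<forall>\<^sub>F j in sequentially. K * (diameter (B j))^2 + K * diameter (B j) < \<epsilon>"
      by (rule final_eps[OF K0 lim _ e]) (simp add: diameter_ge_0 bounded_subset[OF bounded_sqI] BI)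
    then show "\<forall>\<^sub>F j in sequentially. \<forall>p\<in>B j. Ups j differentiable (at p) \<and>
        norm (Ups j p - fst p) + onorm (\<lambda>v. frechet_derivative (Ups j) (at p) v - fst v) < \<epsilon>"
    proof eventually_elim
      case (elim j)
      show ?case
      proof
        fix p assume pB: "p \<in> B j"
        have k1: "Ups j differentiable (at p)" using key[OF pB] by blast
        have k2: "norm (Ups j p - fst p) + onorm (\<lambda>v. frechet_derivative (Ups j) (at p) v - fst v)
          \<le> K * (diameter (B j))^2 + K * diameter (B j)" using key[OF pB] by blast
        show "Ups j differentiable (at p) \<and>
          norm (Ups j p - fst p) + onorm (\<lambda>v. frechet_derivative (Ups j) (at p) v - fst v) < \<epsilon>"
          using k1 k2 elim by linarith
      qed
    qed
  qed
qed



lemma ball_sub: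
  assumes "dist a w \<le> s" "s + r \<le> R" shows "ball w r \<subseteq> ball a R"
proof
  fix x assume "x \<in> ball w r"
  hence "dist w x < r" by simp
  moreover have "dist a x \<le> dist a w + dist w x" by (rule dist_triangle)
  ultimately show "x \<in> ball a R" using assms by simp
qed

lemma cball_sub:
  assumes "dist a w \<le> s" "s + r \<le> R" shows "cball w r \<subseteq> cball a R"
proof
  fix x assume "x \<in> cball w r"
  hence "dist w x \<le> r" by simp
  moreover have "dist a x \<le> dist a w + dist w x" by (rule dist_triangle)
  ultimately show "x \<in> cball a R" using assms by simp
qed

lemma GL:
  fixes F :: "complex \<times> complex \<Rightarrow> complex"
  assumes R: "0 < R"
   and A1: "\<And>z w. z \<in> cball a R \<Longrightarrow> w \<in> cball b R \<Longrightarrow> (\<lambda>s. F (s,w)) field_differentiable at z"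
   and A2: "\<And>z w. z \<in> cball a R \<Longrightarrow> w \<in> cball b R \<Longrightarrow> (\<lambda>s. F (z,s)) field_differentiable at w"
   and A3: "\<And>z w. z \<in> cball a R \<Longrightarrow> w \<in> cball b R \<Longrightarrow> norm (F (z,w)) \<le> K"
  shows "\<And>z w w'. z \<in> cball a (R/4) \<Longrightarrow> w \<in> cball b (R/2) \<Longrightarrow> w' \<in> cball b (R/2) \<Longrightarrow>
            norm (pdx F (z,w) - pdx F (z,w')) \<le> 8*(K+1)/R^2 * norm (w - w')"
    and "\<And>z z' w. z \<in> cball a (R/4) \<Longrightarrow> z' \<in> cball a (R/4) \<Longrightarrow> w \<in> cball b (R/2) \<Longrightarrow>
            norm (pdx F (z,w) - pdx F (z',w)) \<le> 8*(K+1)/R^2 * norm (z - z')"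
proof -
  have "norm (F (a,b)) \<le> K" using A3[of a b] R by simp
  hence K0: "0 \<le> K" using norm_ge_zero order_trans by blast
  have hol1: "(\<lambda>s. F(s,w)) holomorphic_on ball a R" if "w \<in> cball b R" for w
    unfolding holomorphic_on_def
  proof
    fix x assume "x \<in> ball a R"
    then show "(\<lambda>s. F(s,w)) field_differentiable at x within ball a R"
      using A1[of x w] that field_differentiable_at_within by auto
  qed
  have cont1: "continuous_on (cball a R) (\<lambda>s. F(s,w))" if "w \<in> cball b R" for w
    by (intro continuous_at_imp_continuous_on ballI field_differentiable_imp_continuous_at A1 that)
  have hol2: "(\<lambda>s. F(z,s)) holomorphic_on ball b R" if "z \<in> cball a R" for z
    unfolding holomorphic_on_def
  proof
    fix x assume "x \<in> ball b R"
    then show "(\<lambda>s. F(z,s)) field_differentiable at x within ball b R"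
      using A2[of z x] that field_differentiable_at_within by auto
  qed
  have cont2: "continuous_on (cball b R) (\<lambda>s. F(z,s))" if "z \<in> cball a R" for z
    by (intro continuous_at_imp_continuous_on ballI field_differentiable_imp_continuous_at A2 that)
  have L1: "norm (deriv (\<lambda>s. F(z,s)) w) \<le> 2*(K+1)/R" if z: "z \<in> cball a R" and w: "w \<in> cball b (R/2)" for z w
  proof -
    have sub1: "ball w (R/2) \<subseteq> ball b R" using w by (intro ball_sub[of _ _ "R/2"]) auto
    have sub2: "cball w (R/2) \<subseteq> cball b R" using w by (intro cball_sub[of _ _ "R/2"]) auto
    have "cmod ((deriv ^^ 1) (\<lambda>s. F(z,s)) w) \<le> fact 1 * (K+1) / (R/2)^1"
    proof (rule Cauchy_higher_deriv_bound[where y=0])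
      show "(\<lambda>s. F(z,s)) holomorphic_on ball w (R/2)" using holomorphic_on_subset[OF hol2[OF z] sub1] .
      show "continuous_on (cball w (R/2)) (\<lambda>s. F(z,s))" using continuous_on_subset[OF cont2[OF z] sub2] .
      fix s assume "s \<in> ball w (R/2)"
      hence "s \<in> cball b R" using sub1 by auto
      then show "F(z,s) \<in> ball 0 (K+1)" using A3[OF z] by fastforce
    qed (use R in auto)
    then show ?thesis by (simp add: mult.commute)
  qed
  have L2: "norm (F(z,w) - F(z,w')) \<le> 2*(K+1)/R * norm (w - w')"
    if z: "z \<in> cball a R" and w: "w \<in> cball b (R/2)" and w': "w' \<in> cball b (R/2)" for z w w'
  proof (rule field_differentiable_bound[OF convex_cball, of _ _ "\<lambda>s. F(z,s)" "deriv (\<lambda>s. F(z,s))"])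
    fix t assume t: "t \<in> cball b (R/2)"
    hence tR: "t \<in> cball b R" using R by auto
    show "((\<lambda>s. F(z,s)) has_field_derivative deriv (\<lambda>s. F(z,s)) t) (at t within cball b (R/2))"
      using A2[OF z tR] DERIV_deriv_iff_field_differentiable has_field_derivative_at_within by blast
    show "norm (deriv (\<lambda>s. F(z,s)) t) \<le> 2*(K+1)/R" using L1[OF z t] .
  qed (use w w' in auto)
  show C1: "norm (pdx F (z,w) - pdx F (z,w')) \<le> 8*(K+1)/R^2 * norm (w - w')"
    if z: "z \<in> cball a (R/4)" and w: "w \<in> cball b (R/2)" and w': "w' \<in> cball b (R/2)" for z w w'
  proof -
    define r where "r = R/4"
    have r0: "0 < r" using R r_def by simp
    have wR: "w \<in> cball b R" "w' \<in> cball b R" using w w' R by auto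
    have sub1: "ball z r \<subseteq> ball a R" using z R by (intro ball_sub[of _ _ "R/4"]) (auto simp: r_def)
    have sub2: "cball z r \<subseteq> cball a (R/2)" using z by (intro cball_sub[of _ _ "R/4"]) (auto simp: r_def)
    have sub3: "cball a (R/2) \<subseteq> cball a R" using R by auto
    have I: "((\<lambda>u. F(u,v) / (u - z)^2) has_contour_integral (2 * pi * \<i> * deriv (\<lambda>s. F(s,v)) z)) (circlepath z r)"
      if v: "v \<in> cball b R" for v
      using Cauchy_has_contour_integral_higher_derivative_circlepath[of z r "\<lambda>s. F(s,v)" z 1]
        continuous_on_subset[OF cont1[OF v]] sub2 sub3 holomorphic_on_subset[OF hol1[OF v] sub1] r0
      by (auto simp: numeral_2_eq_2)
    have ID: "((\<lambda>u. F(u,w) / (u - z)^2 - F(u,w') / (u - z)^2) has_contour_integral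
               (2 * pi * \<i> * deriv (\<lambda>s. F(s,w)) z - 2 * pi * \<i> * deriv (\<lambda>s. F(s,w')) z)) (circlepath z r)"
      by (rule has_contour_integral_diff[OF I[OF wR(1)] I[OF wR(2)]])
    define B where "B = 2*(K+1)/R * norm (w - w') / r^2"
    have B0: "0 \<le> B" using K0 R r0 by (simp add: B_def)
    have "norm (2 * pi * \<i> * deriv (\<lambda>s. F(s,w)) z - 2 * pi * \<i> * deriv (\<lambda>s. F(s,w')) z) \<le> B * (2*pi*r)"
    proof (rule has_contour_integral_bound_circlepath[OF ID B0 r0])
      fix u assume u: "norm (u - z) = r"
      hence "u \<in> cball z r" by (simp add: dist_norm norm_minus_commute)
      hence uc: "u \<in> cball a R" using sub2 sub3 by blast
      have "norm (F(u,w) / (u - z)^2 - F(u,w') / (u - z)^2) = norm (F(u,w) - F(u,w')) / r^2"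
        using u by (simp add: diff_divide_distrib[symmetric] norm_divide norm_power)
      also have "\<dots> \<le> (2*(K+1)/R * norm (w - w')) / r^2"
        by (rule divide_right_mono[OF L2[OF uc w w']]) simp
      finally show "norm (F(u,w) / (u - z)^2 - F(u,w') / (u - z)^2) \<le> B" unfolding B_def .
    qed
    also have "\<dots> = 2 * pi * (8*(K+1)/R^2 * norm (w - w'))" using R by (simp add: B_def r_def field_simps power2_eq_square)
    finally have "2 * pi * norm (deriv (\<lambda>s. F(s,w)) z - deriv (\<lambda>s. F(s,w')) z) \<le> 2 * pi * (8*(K+1)/R^2 * norm (w - w'))"
      by (simp add: right_diff_distrib[symmetric] norm_mult)
    hence "norm (deriv (\<lambda>s. F(s,w)) z - deriv (\<lambda>s. F(s,w')) z) \<le> 8*(K+1)/R^2 * norm (w - w')"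
      by (rule mult_left_le_imp_le) (simp add: pi_gt_zero)
    then show ?thesis by (simp add: pdx_def)
  qed
  show C2: "norm (pdx F (z,w) - pdx F (z',w)) \<le> 8*(K+1)/R^2 * norm (z - z')"
    if z: "z \<in> cball a (R/4)" and z': "z' \<in> cball a (R/4)" and w: "w \<in> cball b (R/2)" for z z' w
  proof -
    have wR: "w \<in> cball b R" using w R by auto
    define f where "f = (\<lambda>s. F(s,w))"
    have hd: "deriv f holomorphic_on ball a R" unfolding f_def by (rule holomorphic_deriv[OF hol1[OF wR] open_ball])
    have "norm (deriv f z - deriv f z') \<le> 8*(K+1)/R^2 * norm (z - z')"
    proof (rule field_differentiable_bound[OF convex_cball, of _ _ "deriv f" "deriv (deriv f)"])
      fix t assume t: "t \<in> cball a (R/4)"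
      have tb: "t \<in> ball a R" using t R by auto
      show "(deriv f has_field_derivative deriv (deriv f) t) (at t within cball a (R/4))"
        using hd tb holomorphic_on_open[of "ball a R" "deriv f"]
        by (metis DERIV_deriv_iff_field_differentiable field_differentiable_def has_field_derivative_at_within open_ball)
      have sub1: "ball t (R/2) \<subseteq> ball a R" using t R by (intro ball_sub[of _ _ "R/4"]) auto
      have sub2: "cball t (R/2) \<subseteq> cball a R" using t R by (intro cball_sub[of _ _ "R/4"]) auto
      have "cmod ((deriv ^^ 2) f t) \<le> fact 2 * (K+1) / (R/2)^2"
      proof (rule Cauchy_higher_deriv_bound[where y=0])
        show "f holomorphic_on ball t (R/2)" unfolding f_def using holomorphic_on_subset[OF hol1[OF wR] sub1] .
        show "continuous_on (cball t (R/2)) f" unfolding f_def using continuous_on_subset[OF cont1[OF wR] sub2] .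
        fix s assume "s \<in> ball t (R/2)"
        hence "s \<in> cball a R" using sub1 by auto
        then show "f s \<in> ball 0 (K+1)" using A3[OF _ wR] unfolding f_def by fastforce
      qed (use R in auto)
      then show "norm (deriv (deriv f) t) \<le> 8*(K+1)/R^2"
        by (simp add: numeral_2_eq_2 power2_eq_square field_simps)
    qed (use z z' in auto)
    then show ?thesis by (simp add: pdx_def f_def)
  qed
qed


lemma pd_x_cplx:
  fixes F :: "complex \<times> complex \<Rightarrow> complex"
  assumes "(F has_derivative (\<lambda>(u,v). a * u + b * v)) (at (z,w))"
  shows "((\<lambda>t. F (t,w)) has_field_derivative a) (at z)"
proof -
  have "((\<lambda>t. (t,w)) has_derivative (\<lambda>u. (u,0))) (at z)"
    by (auto intro!: derivative_eq_intros)
  from diff_chain_at[OF this assms]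
  have "((\<lambda>t. F(t,w)) has_derivative (\<lambda>u. a * u)) (at z)" by (simp add: o_def)
  then show ?thesis by (simp add: has_field_derivative_def)
qed

lemma pd_y_cplx:
  fixes F :: "complex \<times> complex \<Rightarrow> complex"
  assumes "(F has_derivative (\<lambda>(u,v). a * u + b * v)) (at (z,w))"
  shows "((\<lambda>t. F (z,t)) has_field_derivative b) (at w)"
proof -
  have "((\<lambda>t. (z,t)) has_derivative (\<lambda>u. (0,u))) (at w)"
    by (auto intro!: derivative_eq_intros)
  from diff_chain_at[OF this assms]
  have "((\<lambda>t. F(z,t)) has_derivative (\<lambda>u. b * u)) (at w)" by (simp add: o_def)
  then show ?thesis by (simp add: has_field_derivative_def)
qed

lemma ball_in_interior:
  fixes x :: "'a::real_normed_vector"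
  assumes x: "x \<in> T" and d: "0 < \<delta>" and inf: "infdist x (frontier T) \<ge> \<delta>"
  shows "ball x \<delta> \<subseteq> interior T"
proof
  have xi: "x \<in> interior T"
  proof (rule ccontr)
    assume "x \<notin> interior T"
    hence "x \<in> frontier T" using x closure_subset unfolding frontier_def by blast
    hence "infdist x (frontier T) = 0" by (rule infdist_zero)
    then show False using inf d by simp
  qed
  fix y assume y: "y \<in> ball x \<delta>"
  show "y \<in> interior T"
  proof (rule ccontr)
    assume "y \<notin> interior T"
    hence n2: "ball x \<delta> - interior T \<noteq> {}" using y by blast
    have n1: "ball x \<delta> \<inter> interior T \<noteq> {}" using xi d centre_in_ball by blast
    have "ball x \<delta> \<inter> frontier (interior T) \<noteq> {}"
      using connected_Int_frontier[OF connected_ball n1 n2] .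
    then obtain q where q: "q \<in> ball x \<delta>" "q \<in> frontier T" using frontier_interior_subset by blast
    have "infdist x (frontier T) \<le> dist x q" by (rule infdist_le[OF q(2)])
    then show False using q(1) inf by simp
  qed
qed

lemma norm_Itl: "z \<in> Itl \<rho> \<Longrightarrow> norm z \<le> 1 + \<rho>"
  using cmod_le[of z] unfolding Itl_def by auto

lemma bounded_Itl2: "bounded (Itl \<rho> \<times> Itl \<rho>)"
proof -
  have "bounded (Itl \<rho>)" by (rule boundedI[of _ "1+\<rho>"]) (rule norm_Itl)
  then show ?thesis by (intro bounded_Times)
qed


lemma cball_norm: "z \<in> cball c r \<longleftrightarrow> norm (z - c) \<le> r"
  by (simp add: dist_norm norm_minus_commute)

lemma partII_single:
  fixes Z :: "complex \<times> complex \<Rightarrow> complex" and S :: "(complex \<times> complex) set"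
  assumes R: "0 < R"
   and hol: "\<forall>p\<in>S. \<exists>a b. (Z has_derivative (\<lambda>(u, v). a * u + b * v)) (at p)"
   and PS: "cball zc R \<times> cball wc R \<subseteq> S"
   and K: "\<forall>p\<in>S. norm (Z p) \<le> K"
   and c0: "pdx Z (zc,wc) \<noteq> 0"
   and zd: "norm (z - zc) \<le> dm" and wd: "norm (w - wc) \<le> dm" and dm: "dm \<le> R/4"
  shows "norm ((Z(z,w) - Z(zc,w))/pdx Z (zc,wc) + zc - z) \<le> 2*(8*(K+1)/R^2)*dm^2/norm (pdx Z (zc,wc))"
    and "\<exists>D. ((\<lambda>q. (Z q - Z (zc, snd q))/pdx Z (zc,wc) + zc) has_derivative D) (at (z,w)) \<and>
            onorm (\<lambda>v. D v - fst v) \<le> 3*(8*(K+1)/R^2)*dm/norm (pdx Z (zc,wc))"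
proof -
  define L where "L = 8*(K+1)/R^2"
  define c where "c = pdx Z (zc,wc)"
  have dm0: "0 \<le> dm" by (rule order_trans[OF norm_ge_zero zd])
  have inP: "(s,t) \<in> S" if "norm (s - zc) \<le> R" "norm (t - wc) \<le> R" for s t
  proof -
    have "(s,t) \<in> cball zc R \<times> cball wc R" using that by (simp add: dist_norm norm_minus_commute)
    then show ?thesis using PS by blast
  qed
  have hd: "(Z has_derivative (\<lambda>(u,v). pdx Z p * u + pdy Z p * v)) (at p)" if "p \<in> S" for p
  proof -
    obtain s t where p: "p = (s,t)" by (cases p)
    have "\<exists>a b. (Z has_derivative (\<lambda>(u, v). a * u + b * v)) (at p)" using hol that by blast
    then obtain a b where ab: "(Z has_derivative (\<lambda>(u, v). a * u + b * v)) (at (s,t))" unfolding p by blast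
    have "pdx Z p = a" unfolding pdx_def p fst_conv snd_conv by (rule DERIV_imp_deriv[OF pd_x_cplx[OF ab]])
    moreover have "pdy Z p = b" unfolding pdy_def p fst_conv snd_conv by (rule DERIV_imp_deriv[OF pd_y_cplx[OF ab]])
    ultimately show ?thesis using ab unfolding p by simp
  qed
  have "norm (Z (zc,wc)) \<le> K" using K inP[of zc wc] R by simp
  hence K0: "0 \<le> K" by (rule order_trans[OF norm_ge_zero])
  have A1: "(\<lambda>s. Z (s,t)) field_differentiable at s" if "s \<in> cball zc R" "t \<in> cball wc R" for s t
  proof -
    have "(s,t) \<in> S" using that unfolding cball_norm by (intro inP)
    then show ?thesis unfolding field_differentiable_def using pd_x_cplx[OF hd] by blast
  qed
  have A2: "(\<lambda>t. Z (s,t)) field_differentiable at t" if "s \<in> cball zc R" "t \<in> cball wc R" for s t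
  proof -
    have "(s,t) \<in> S" using that unfolding cball_norm by (intro inP)
    then show ?thesis unfolding field_differentiable_def using pd_y_cplx[OF hd] by blast
  qed
  have A3: "norm (Z (s,t)) \<le> K" if "s \<in> cball zc R" "t \<in> cball wc R" for s t
  proof -
    have "(s,t) \<in> S" using that unfolding cball_norm by (intro inP)
    then show ?thesis using K by blast
  qed
  have G1: "norm (pdx Z (s,w1) - pdx Z (s,w2)) \<le> 8*(K+1)/R^2 * norm (w1 - w2)"
    if "s \<in> cball zc (R/4)" "w1 \<in> cball wc (R/2)" "w2 \<in> cball wc (R/2)" for s w1 w2
  proof (rule GL(1)[of R zc wc Z K, OF R _ _ _ that])
    show "(\<lambda>s. Z (s, w)) field_differentiable at z" if "z \<in> cball zc R" "w \<in> cball wc R" for z w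
      using A1[OF that] .
    show "(\<lambda>s. Z (z, s)) field_differentiable at w" if "z \<in> cball zc R" "w \<in> cball wc R" for z w
      using A2[OF that] .
    show "norm (Z (z, w)) \<le> K" if "z \<in> cball zc R" "w \<in> cball wc R" for z w
      using A3[OF that] .
  qed
  have G2: "norm (pdx Z (s1,w) - pdx Z (s2,w)) \<le> 8*(K+1)/R^2 * norm (s1 - s2)"
    if "s1 \<in> cball zc (R/4)" "s2 \<in> cball zc (R/4)" "w \<in> cball wc (R/2)" for s1 s2 w
  proof (rule GL(2)[of R zc wc Z K, OF R _ _ _ that])
    show "(\<lambda>s. Z (s, w)) field_differentiable at z" if "z \<in> cball zc R" "w \<in> cball wc R" for z w
      using A1[OF that] .
    show "(\<lambda>s. Z (z, s)) field_differentiable at w" if "z \<in> cball zc R" "w \<in> cball wc R" for z w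
      using A2[OF that] .
    show "norm (Z (z, w)) \<le> K" if "z \<in> cball zc R" "w \<in> cball wc R" for z w
      using A3[OF that] .
  qed
  define Zs where "Zs = (\<lambda>p. Z (snd p, fst p))"
  have Gs: "norm (pdx Zs (w',z1) - pdx Zs (w',z2)) \<le> 8*(K+1)/R^2 * norm (z1 - z2)"
    if "w' \<in> cball wc (R/4)" "z1 \<in> cball zc (R/2)" "z2 \<in> cball zc (R/2)" for w' z1 z2
  proof (rule GL(1)[of R wc zc Zs K, OF R _ _ _ that])
    show "(\<lambda>s. Zs (s, w)) field_differentiable at z" if "z \<in> cball wc R" "w \<in> cball zc R" for z w
      unfolding Zs_def using A2[OF that(2) that(1)] by simp
    show "(\<lambda>s. Zs (z, s)) field_differentiable at w" if "z \<in> cball wc R" "w \<in> cball zc R" for z w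
      unfolding Zs_def using A1[OF that(2) that(1)] by simp
    show "norm (Zs (z, w)) \<le> K" if "z \<in> cball wc R" "w \<in> cball zc R" for z w
      unfolding Zs_def using A3[OF that(2) that(1)] by simp
  qed
  have pdxs: "pdx Zs (t,s) = pdy Z (s,t)" for s t by (simp add: pdx_def pdy_def Zs_def)
  have zI: "z \<in> cball zc (R/4)" "zc \<in> cball zc (R/4)" using zd dm R unfolding cball_norm by auto
  have wI: "w \<in> cball wc (R/2)" "wc \<in> cball wc (R/2)" using wd dm R unfolding cball_norm by auto
  have wI4: "w \<in> cball wc (R/4)" using wd dm unfolding cball_norm by auto
  have zI2: "z \<in> cball zc (R/2)" "zc \<in> cball zc (R/2)" using zd dm R unfolding cball_norm by auto
  have L0: "0 \<le> L" using K0 R by (simp add: L_def)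
  have seg: "norm (pdx Z (t,w) - c) \<le> 2*L*dm" if t: "norm (t - zc) \<le> dm" for t
  proof -
    have tI: "t \<in> cball zc (R/4)" using t dm unfolding cball_norm by auto
    have "norm (pdx Z (t,w) - c) \<le> norm (pdx Z (t,w) - pdx Z (zc,w)) + norm (pdx Z (zc,w) - pdx Z (zc,wc))"
      using norm_triangle_ineq[of "pdx Z (t,w) - pdx Z (zc,w)" "pdx Z (zc,w) - pdx Z (zc,wc)"] unfolding c_def by simp
    also have "\<dots> \<le> L * norm (t - zc) + L * norm (w - wc)"
      using G2[OF tI zI(2) wI(1)] G1[OF zI(2) wI(1) wI(2)] unfolding L_def by (rule add_mono)
    also have "\<dots> \<le> L * dm + L * dm"
      using t wd L0 by (intro add_mono mult_left_mono) auto
    finally show ?thesis by simp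
  qed
  have cn: "c \<noteq> 0" using c0 c_def by simp
  show "norm ((Z(z,w) - Z(zc,w))/pdx Z (zc,wc) + zc - z) \<le> 2*(8*(K+1)/R^2)*dm^2/norm (pdx Z (zc,wc))"
  proof -
    have "norm ((\<lambda>t. Z(t,w) - c*t) z - (\<lambda>t. Z(t,w) - c*t) zc) \<le> 2*L*dm * norm (z - zc)"
    proof (rule field_differentiable_bound[OF convex_closed_segment, of zc z _ "\<lambda>t. pdx Z (t,w) - c"])
      fix t assume t: "t \<in> closed_segment zc z"
      hence tz: "norm (t - zc) \<le> dm" using segment_bound1[OF t] zd by simp
      have "(t,w) \<in> S" using inP tz dm wd R by simp
      then have "((\<lambda>t. Z(t,w)) has_field_derivative pdx Z (t,w)) (at t)" using pd_x_cplx[OF hd] by simp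
      then have "((\<lambda>t. Z(t,w) - c*t) has_field_derivative pdx Z (t,w) - c * 1) (at t)"
        by (intro DERIV_diff DERIV_cmult DERIV_ident)
      then show "((\<lambda>t. Z(t,w) - c*t) has_field_derivative pdx Z (t,w) - c) (at t within closed_segment zc z)"
        using has_field_derivative_at_within by simp
      show "norm (pdx Z (t,w) - c) \<le> 2*L*dm" using seg[OF tz] .
    qed auto
    hence n1: "norm (Z(z,w) - Z(zc,w) - c*(z - zc)) \<le> 2*L*dm * norm (z - zc)" by (simp add: algebra_simps)
    have "(Z(z,w) - Z(zc,w))/c + zc - z = (Z(z,w) - Z(zc,w) - c*(z - zc))/c" using cn by (simp add: field_simps)
    hence "norm ((Z(z,w) - Z(zc,w))/c + zc - z) = norm (Z(z,w) - Z(zc,w) - c*(z - zc)) / norm c" by (simp add: norm_divide)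
    also have "\<dots> \<le> 2*L*dm * norm (z - zc) / norm c" by (rule divide_right_mono[OF n1]) simp
    also have "\<dots> \<le> 2*L*dm * dm / norm c"
      using zd L0 dm0 by (intro divide_right_mono mult_left_mono) auto
    finally show ?thesis unfolding c_def L_def by (simp add: power2_eq_square mult.assoc)
  qed
  show "\<exists>D. ((\<lambda>q. (Z q - Z (zc, snd q))/pdx Z (zc,wc) + zc) has_derivative D) (at (z,w)) \<and>
            onorm (\<lambda>v. D v - fst v) \<le> 3*(8*(K+1)/R^2)*dm/norm (pdx Z (zc,wc))"
  proof (intro exI conjI)
    have zwS: "(z,w) \<in> S" using inP zd wd dm R by simp
    have zcwS: "(zc,w) \<in> S" using inP wd dm R by simp
    have A: "(Z has_derivative (\<lambda>(u,v). pdx Z (z,w) * u + pdy Z (z,w) * v)) (at (z,w))" using hd[OF zwS] .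
    have "((\<lambda>q. (zc, snd q)) has_derivative (\<lambda>v. (0, snd v))) (at (z,w))"
      by (auto intro!: derivative_eq_intros)
    moreover have "(Z has_derivative (\<lambda>(u,v). pdx Z (zc,w) * u + pdy Z (zc,w) * v)) (at ((\<lambda>q. (zc, snd q)) (z,w)))"
      using hd[OF zcwS] by simp
    ultimately have "(Z \<circ> (\<lambda>q. (zc, snd q)) has_derivative (\<lambda>(u,v). pdx Z (zc,w) * u + pdy Z (zc,w) * v) \<circ> (\<lambda>v. (0, snd v))) (at (z,w))"
      by (rule diff_chain_at)
    then
    have B0: "((\<lambda>q. Z (zc, snd q)) has_derivative (\<lambda>v. pdy Z (zc,w) * snd v)) (at (z,w))"
      by (simp add: o_def)
    have "((\<lambda>q. (Z q - Z (zc, snd q))/c) has_derivative (\<lambda>v. ((\<lambda>(u,v). pdx Z (z,w) * u + pdy Z (z,w) * v) v - pdy Z (zc,w) * snd v)/c)) (at (z,w))"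
      using bounded_linear.has_derivative[OF bounded_linear_divide[of c] has_derivative_diff[OF A B0]] .
    then show "((\<lambda>q. (Z q - Z (zc, snd q))/pdx Z (zc,wc) + zc) has_derivative (\<lambda>v. ((\<lambda>(u,v). pdx Z (z,w) * u + pdy Z (z,w) * v) v - pdy Z (zc,w) * snd v)/c)) (at (z,w))"
      unfolding c_def by (rule has_derivative_add_const)
    show "onorm (\<lambda>v. ((\<lambda>(u,v). pdx Z (z,w) * u + pdy Z (z,w) * v) v - pdy Z (zc,w) * snd v)/c - fst v) \<le> 3*(8*(K+1)/R^2)*dm/norm (pdx Z (zc,wc))"
    proof (rule onorm_le)
      fix v :: "complex \<times> complex"
      obtain u v' where v: "v = (u,v')" by (cases v)
      have e1: "((\<lambda>(u,v). pdx Z (z,w) * u + pdy Z (z,w) * v) v - pdy Z (zc,w) * snd v)/c - fst v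
          = ((pdx Z (z,w) - c) * u + (pdy Z (z,w) - pdy Z (zc,w)) * v') / c"
        using cn v by (simp add: field_simps)
      have a1: "norm (pdx Z (z,w) - c) \<le> 2*L*dm" using seg[OF zd] .
      have a2: "norm (pdy Z (z,w) - pdy Z (zc,w)) \<le> L*dm"
      proof -
        have "norm (pdy Z (z,w) - pdy Z (zc,w)) \<le> L * norm (z - zc)"
          using Gs[OF wI4 zI2(1) zI2(2)] unfolding pdxs L_def .
        also have "\<dots> \<le> L * dm" using zd L0 by (rule mult_left_mono)
        finally show ?thesis .
      qed
      have uv: "norm u \<le> norm v" "norm v' \<le> norm v" unfolding v
        by (simp_all add: norm_Pair real_sqrt_sum_squares_ge1 real_sqrt_sum_squares_ge2)
      have nn1: "0 \<le> 2*L*dm" and nn2: "0 \<le> L*dm" using L0 dm0 by auto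
      have t1: "norm (pdx Z (z,w) - c) * norm u \<le> (2*L*dm) * norm v"
        by (rule mult_mono[OF a1 uv(1) nn1]) simp
      have t2: "norm (pdy Z (z,w) - pdy Z (zc,w)) * norm v' \<le> (L*dm) * norm v"
        by (rule mult_mono[OF a2 uv(2) nn2]) simp
      have "norm ((pdx Z (z,w) - c) * u + (pdy Z (z,w) - pdy Z (zc,w)) * v')
            \<le> norm (pdx Z (z,w) - c) * norm u + norm (pdy Z (z,w) - pdy Z (zc,w)) * norm v'"
        by (metis norm_mult norm_triangle_ineq)
      also have "\<dots> \<le> (2*L*dm) * norm v + (L*dm) * norm v" using t1 t2 by linarith
      finally have "norm ((pdx Z (z,w) - c) * u + (pdy Z (z,w) - pdy Z (zc,w)) * v') / norm c
            \<le> ((2*L*dm) * norm v + (L*dm) * norm v) / norm c"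
        by (rule divide_right_mono) simp
      also have "\<dots> = 3*L*dm/norm c * norm v" by (simp add: field_simps)
      finally have fin: "norm ((pdx Z (z,w) - c) * u + (pdy Z (z,w) - pdy Z (zc,w)) * v') / norm c \<le> 3*L*dm/norm c * norm v" .
      have "norm (((\<lambda>(u,v). pdx Z (z,w) * u + pdy Z (z,w) * v) v - pdy Z (zc,w) * snd v)/c - fst v)
          \<le> 3*L*dm/norm c * norm v"
        using fin by (subst e1) (simp add: norm_divide)
      then show "norm (((\<lambda>(u,v). pdx Z (z,w) * u + pdy Z (z,w) * v) v - pdy Z (zc,w) * snd v)/c - fst v)
          \<le> 3*(8*(K+1)/R^2)*dm/norm (pdx Z (zc,wc)) * norm v"
        by (simp only: L_def c_def)
    qed
  qed
qed

lemma partII: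
  fixes \<rho> :: real
    and Z :: "nat \<Rightarrow> complex \<times> complex \<Rightarrow> complex"
    and Bc :: "nat \<Rightarrow> (complex \<times> complex) set"
    and zc wc :: "nat \<Rightarrow> complex"
  assumes \<rho>: "\<rho> > 0" and hol: "\<forall>j. holomorphic2_on (Z j) (interior (Itl \<rho> \<times> Itl \<rho>))"
   and img: "\<forall>j. Z j ` (Itl \<rho> \<times> Itl \<rho>) \<subseteq> Itl \<rho>"
   and dz: "\<forall>j. \<forall>p\<in>interior (Itl \<rho> \<times> Itl \<rho>). 0 < cmod (pdx (Z j) p) \<and> cmod (pdx (Z j) p) < 1"
   and BcI: "\<forall>j. Bc j \<subseteq> Itl \<rho> \<times> Itl \<rho>" and inB: "\<forall>j. (zc j, wc j) \<in> Bc j"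
   and lim: "(\<lambda>j. diameter (Bc j) / cmod (pdx (Z j) (zc j, wc j))) \<longlonglongrightarrow> 0"
   and ex: "\<exists>\<delta>>0. \<forall>j. infdist (zc j, wc j) (frontier (Itl \<rho> \<times> Itl \<rho>)) \<ge> \<delta>"
  shows "C1_close_to_fst
           (\<lambda>j (z, w). (Z j (z, w) - Z j (zc j, w)) / pdx (Z j) (zc j, wc j) + zc j) Bc"
proof -
  obtain \<delta> where d0: "\<delta> > 0" and dinf: "\<forall>j. infdist (zc j, wc j) (frontier (Itl \<rho> \<times> Itl \<rho>)) \<ge> \<delta>"
    using ex by blast
  define T where "T = Itl \<rho> \<times> Itl \<rho>"
  define S where "S = interior T"
  define R where "R = \<delta>/4"
  define K where "K = 1 + \<rho>"
  define L where "L = 8*(K+1)/R^2"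
  define M where "M = 3*L"
  have R0: "0 < R" using d0 R_def by simp
  have M0: "0 \<le> M" using \<rho> by (simp add: M_def L_def K_def)
  define t where "t j = diameter (Bc j) / cmod (pdx (Z j) (zc j, wc j))" for j
  define Ups where "Ups = (\<lambda>j (z, w). (Z j (z, w) - Z j (zc j, w)) / pdx (Z j) (zc j, wc j) + zc j)"
  have bB: "bounded (Bc j)" for j using bounded_subset[OF bounded_Itl2] BcI by blast
  have cT: "(zc j, wc j) \<in> T" for j using inB BcI T_def by blast
  have ballS: "ball (zc j, wc j) \<delta> \<subseteq> S" for j
    unfolding S_def by (rule ball_in_interior[OF cT d0]) (use dinf T_def in blast)
  have PS: "cball (zc j) R \<times> cball (wc j) R \<subseteq> S" for j
  proof
    fix q assume q: "q \<in> cball (zc j) R \<times> cball (wc j) R"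
    obtain s u where qs: "q = (s,u)" by (cases q)
    have "dist (s,u) (zc j, wc j) = norm (s - zc j, u - wc j)" by (simp add: dist_norm)
    also have "\<dots> \<le> norm (s - zc j) + norm (u - wc j)" by (rule norm_Pair_le)
    also have "\<dots> \<le> R + R" using q qs by (intro add_mono) (auto simp: dist_norm norm_minus_commute)
    also have "\<dots> < \<delta>" using R_def d0 by simp
    finally show "q \<in> S" using ballS[of j] qs by (auto simp: dist_commute)
  qed
  have cS: "(zc j, wc j) \<in> S" for j using ballS[of j] d0 by auto
  have c01: "0 < cmod (pdx (Z j) (zc j, wc j))" "cmod (pdx (Z j) (zc j, wc j)) < 1" for j
    using dz cS[of j] S_def T_def by auto
  have t0: "0 \<le> t j" for j unfolding t_def using diameter_ge_0[OF bB] by simp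
  have key: "Ups j differentiable (at p) \<and>
        norm (Ups j p - fst p) + onorm (\<lambda>v. frechet_derivative (Ups j) (at p) v - fst v)
          \<le> M * (t j)^2 + M * t j" if tj: "t j < R/4" and pB: "p \<in> Bc j" for j p
  proof -
    obtain z w where p: "p = (z,w)" by (cases p)
    define c where "c = pdx (Z j) (zc j, wc j)"
    define dm where "dm = diameter (Bc j)"
    have cpos: "0 < norm c" "norm c < 1" using c01 c_def by auto
    have dmt: "dm = t j * norm c" unfolding dm_def t_def c_def using cpos c_def by simp
    have dm_le: "dm \<le> t j" using dmt cpos t0[of j] by (simp add: mult_left_le)
    have dist_le: "dist (z,w) (zc j, wc j) \<le> dm"
      unfolding dm_def using diameter_bounded_bound[OF bB] pB p inB by blast
    have zd: "norm (z - zc j) \<le> dm"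
      using dist_fst_le[of "(z,w)" "(zc j, wc j)"] dist_le by (simp add: dist_norm)
    have wd: "norm (w - wc j) \<le> dm"
      using dist_snd_le[of "(z,w)" "(zc j, wc j)"] dist_le by (simp add: dist_norm)
    have dmR: "dm \<le> R/4" using dm_le tj by simp
    have holj: "\<forall>p\<in>S. \<exists>a b. (Z j has_derivative (\<lambda>(u, v). a * u + b * v)) (at p)"
      using hol unfolding holomorphic2_on_def S_def T_def by blast
    have Kj: "\<forall>p\<in>S. norm (Z j p) \<le> K"
    proof
      fix q assume "q \<in> S"
      hence "q \<in> T" using interior_subset S_def by blast
      hence "Z j q \<in> Itl \<rho>" using img T_def by blast
      then show "norm (Z j q) \<le> K" unfolding K_def by (rule norm_Itl)
    qed
    have cne: "pdx (Z j) (zc j, wc j) \<noteq> 0" using cpos c_def by auto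
    note Sg = partII_single[OF R0 holj PS[of j] Kj cne zd wd dmR]
    have Ue: "Ups j = (\<lambda>q. (Z j q - Z j (zc j, snd q))/pdx (Z j) (zc j, wc j) + zc j)"
      unfolding Ups_def by (auto simp: case_prod_beta)
    obtain D where D: "((\<lambda>q. (Z j q - Z j (zc j, snd q))/pdx (Z j) (zc j, wc j) + zc j) has_derivative D) (at (z,w))"
      and Db: "onorm (\<lambda>v. D v - fst v) \<le> 3*L*dm/norm c"
      using Sg(2) unfolding L_def c_def by blast
    have fd: "frechet_derivative (Ups j) (at p) = D" using D frechet_derivative_at Ue p by metis
    have n1: "norm (Ups j p - fst p) \<le> 2*L*dm^2/norm c"
      using Sg(1) p Ue unfolding L_def c_def by simp
    have L0: "0 \<le> L" using \<rho> by (simp add: L_def K_def)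
    have "2*L*dm^2/norm c = 2*L*dm*t j" using dmt cpos by (simp add: power2_eq_square field_simps)
    also have "\<dots> \<le> 2*L*(t j)*(t j)" using dm_le L0 t0[of j] by (intro mult_right_mono mult_left_mono) auto
    also have "\<dots> \<le> M * (t j)^2" using L0 by (simp add: M_def power2_eq_square)
    finally have n1': "norm (Ups j p - fst p) \<le> M * (t j)^2" using n1 by linarith
    have "3*L*dm/norm c = M * t j" using dmt cpos by (simp add: M_def field_simps)
    hence "onorm (\<lambda>v. frechet_derivative (Ups j) (at p) v - fst v) \<le> M * t j" using Db fd by simp
    moreover have "Ups j differentiable (at p)" using D Ue p differentiable_def by metis
    ultimately show ?thesis using n1' by linarith
  qed
  show ?thesis
    unfolding C1_close_to_fst_def Ups_def[symmetric]
  proof (intro allI impI)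
    fix \<epsilon> :: real assume e: "0 < \<epsilon>"
    have lim': "(\<lambda>j. t j) \<longlonglongrightarrow> 0" using lim unfolding t_def .
    have ev1: "\<forall>\<^sub>F j in sequentially. M * (t j)^2 + M * t j < \<epsilon>"
      by (rule final_eps[OF M0 lim' t0 e])
    have "\<forall>\<^sub>F j in sequentially. dist (t j) 0 < R/4" by (rule tendstoD[OF lim']) (use R0 in simp)
    hence ev2: "\<forall>\<^sub>F j in sequentially. t j < R/4" by eventually_elim (use t0 in simp)
    from ev1 ev2 show "\<forall>\<^sub>F j in sequentially. \<forall>p\<in>Bc j. Ups j differentiable (at p) \<and>
        norm (Ups j p - fst p) + onorm (\<lambda>v. frechet_derivative (Ups j) (at p) v - fst v) < \<epsilon>"
    proof eventually_elim
      case (elim j)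
      show ?case
      proof
        fix p assume pB: "p \<in> Bc j"
        have k1: "Ups j differentiable (at p)" using key[OF elim(2) pB] by blast
        have k2: "norm (Ups j p - fst p) + onorm (\<lambda>v. frechet_derivative (Ups j) (at p) v - fst v)
          \<le> M * (t j)^2 + M * t j" using key[OF elim(2) pB] by blast
        show "Ups j differentiable (at p) \<and>
          norm (Ups j p - fst p) + onorm (\<lambda>v. frechet_derivative (Ups j) (at p) v - fst v) < \<epsilon>"
          using k1 k2 elim(1) by linarith
      qed
    qed
  qed
qed


theorem propositionB3:
  fixes X :: "nat \<Rightarrow> real \<times> real \<Rightarrow> real"
    and B :: "nat \<Rightarrow> (real \<times> real) set"
    and x0 y0 :: "nat \<Rightarrow> real"
    and \<rho> :: real
    and Z :: "nat \<Rightarrow> complex \<times> complex \<Rightarrow> complex"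
    and Bc :: "nat \<Rightarrow> (complex \<times> complex) set"
    and zc wc :: "nat \<Rightarrow> complex"
  shows
   "((\<forall>j. C2_on (X j) sqI) \<and>
     (\<forall>j. \<forall>p\<in>sqI. pdx (X j) p \<noteq> 0) \<and>
     (\<forall>j. B j \<subseteq> sqI) \<and>
     (\<lambda>j. diameter (B j)) \<longlonglongrightarrow> 0 \<and>
     (\<forall>j. (x0 j, y0 j) \<in> B j) \<and>
     (\<exists>C. \<forall>j. \<forall>p\<in>sqI. \<bar>pdx (\<lambda>q. ln \<bar>pdx (X j) q\<bar>) p\<bar> \<le> C \<and>
                        \<bar>pdy (\<lambda>q. ln \<bar>pdx (X j) q\<bar>) p\<bar> \<le> C)
     \<longrightarrow> C1_close_to_fst
           (\<lambda>j (x, y). (X j (x, y) - X j (x0 j, y)) / pdx (X j) (x0 j, y0 j) + x0 j) B)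
    \<and>
    (\<rho> > 0 \<and>
     (\<forall>j. holomorphic2_on (Z j) (interior (Itl \<rho> \<times> Itl \<rho>))) \<and>
     (\<forall>j. Z j ` (Itl \<rho> \<times> Itl \<rho>) \<subseteq> Itl \<rho>) \<and>
     (\<forall>j. \<forall>p\<in>interior (Itl \<rho> \<times> Itl \<rho>). 0 < cmod (pdx (Z j) p) \<and> cmod (pdx (Z j) p) < 1) \<and>
     (\<forall>j. Bc j \<subseteq> Itl \<rho> \<times> Itl \<rho>) \<and>
     (\<forall>j. (zc j, wc j) \<in> Bc j) \<and>
     (\<lambda>j. diameter (Bc j) / cmod (pdx (Z j) (zc j, wc j))) \<longlonglongrightarrow> 0 \<and>
     (\<exists>\<delta>>0. \<forall>j. infdist (zc j, wc j) (frontier (Itl \<rho> \<times> Itl \<rho>)) \<ge> \<delta>)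
     \<longrightarrow> C1_close_to_fst
           (\<lambda>j (z, w). (Z j (z, w) - Z j (zc j, w)) / pdx (Z j) (zc j, wc j) + zc j) Bc)"
    apply (intro conjI impI)
   apply (elim conjE)
   apply (rule partI; assumption)
  apply (elim conjE)
  apply (rule partII; assumption)
  done

end
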